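(* Let $\mathbf E$ be a real symmetric $3\times3$ matrix and $\hat{\mathbf e}\in\mathbb R^3$ with $|\hat{\mathbf e}|=1$. Let $\mathbf Q=-\mathbf I+2\hat{\mathbf e}\otimes\hat{\mathbf e}$, $\hat{\mathbf E}=\mathbf Q\mathbf E\mathbf Q^T$, suppose $\hat{\mathbf E}\ne\mathbf E$, and define $$\mathbf a=4\big((\hat{\mathbf e}\cdot\mathbf E\hat{\mathbf e})\hat{\mathbf e}-\mathbf E\hat{\mathbf e}\big),\qquad\mathbf n=\hat{\mathbf e}.$$ Then there exist $\mathbf b_f,\mathbf m_f\in\mathbb R^3$ with $$f\hat{\mathbf E}+(1-f)\mathbf E=\tfrac12(\mathbf b_f\otimes\mathbf m_f+\mathbf m_f\otimes\mathbf b_f)$$ for every $0\le f\le1$ if and only if (CCL1) the middle eigenvalue $\varepsilon_2$ of $\mathbf E$ is $0$ and $\mathrm{rank}\,\mathbf E=2$; (CCL2) $(\mathbf a\cdot\mathbf v_2)(\mathbf n\cdot\mathbf v_2)=0$, where $\mathbf E\mathbf v_2=0$, $|\mathbf v_2|=1$; (CCL3) $\big(\mathrm{tr}(\mathbf E+\hat{\mathbf E})\big)^2-\mathrm{tr}\big((\mathbf E+\hat{\mathbf E})^2\big)\le0$.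
   Context: $\mathbf a\otimes\mathbf n$ denotes the matrix $\mathbf x\mapsto(\mathbf n\cdot\mathbf x)\mathbf a$. *)

theory Defs
  imports "HOL-Analysis.Analysis"
begin

definition tensor :: "real^3 \<Rightarrow> real^3 \<Rightarrow> real^3^3" where
  "tensor a n = (\<chi> i j. a $ i * n $ j)"

definition middle_eigenvalue :: "real^3^3 \<Rightarrow> real \<Rightarrow> bool" where
  "middle_eigenvalue E \<mu> \<longleftrightarrow>
     (\<exists>v1 v2 v3 l1 l3.
        norm v1 = 1 \<and> norm v2 = 1 \<and> norm v3 = 1 \<and>
        v1 \<bullet> v2 = 0 \<and> v1 \<bullet> v3 = 0 \<and> v2 \<bullet> v3 = 0 \<and>
        E *v v1 = l1 *\<^sub>R v1 \<and> E *v v2 = \<mu> *\<^sub>R v2 \<and> E *v v3 = l3 *\<^sub>R v3 \<and>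
        l1 \<le> \<mu> \<and> \<mu> \<le> l3)"

end

theory Submission
  imports Defs
begin


definition c2 :: "real^3^3 \<Rightarrow> real" where
  "c2 M = ((trace M)\<^sup>2 - trace (M ** M)) / 2"

definition sym2 :: "real^3 \<Rightarrow> real^3 \<Rightarrow> real^3^3" where
  "sym2 b m = (1/2) *\<^sub>R (tensor b m + tensor m b)"

lemma trace3: "trace (M::real^3^3) = M$1$1 + M$2$2 + M$3$3"
  by (simp add: trace_def sum_3)

lemma c2_3: "c2 M = M$1$1*M$2$2 - M$1$2*M$2$1 + M$1$1*M$3$3 - M$1$3*M$3$1 + M$2$2*M$3$3 - M$2$3*M$3$2"
  by (simp add: c2_def trace3 matrix_matrix_mult_def sum_3 power2_eq_square) algebra

lemma sym2_nth: "sym2 b m $ i $ j = (b$i*m$j + m$i*b$j)/2"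
  by (simp add: sym2_def tensor_def)

lemma sym2_det: "det (sym2 b m) = 0"
  by (simp add: det_3 sym2_nth field_simps)

lemma inner3: "(x::real^3) \<bullet> y = x$1*y$1 + x$2*y$2 + x$3*y$3"
  by (simp add: inner_vec_def sum_3)

lemma sym2_c2_eq: "c2 (sym2 b m) = ((b \<bullet> m)\<^sup>2 - (b\<bullet>b)*(m\<bullet>m))/4"
  by (simp add: c2_3 sym2_nth inner3 power2_eq_square) algebra

lemma sym2_c2: "c2 (sym2 b m) \<le> 0"
proof -
  have "(b\<bullet>b)*(m\<bullet>m) - (b \<bullet> m)\<^sup>2 = (b$1*m$2-b$2*m$1)\<^sup>2 + (b$1*m$3-b$3*m$1)\<^sup>2 + (b$2*m$3-b$3*m$2)\<^sup>2"
    by (simp add: inner3 power2_eq_square algebra_simps)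
  also have "\<dots> \<ge> 0" by simp
  finally show ?thesis by (simp add: sym2_c2_eq)
qed

lemma trace_conj:
  assumes "R ** transpose R = mat 1"
  shows "trace (transpose R ** N ** R) = trace (N::real^3^3)"
proof -
  have "trace (transpose R ** N ** R) = trace (R ** (transpose R ** N))"
    by (rule trace_mul_sym)
  also have "\<dots> = trace ((R ** transpose R) ** N)" by (simp add: matrix_mul_assoc)
  finally show ?thesis using assms by simp
qed

lemma c2_conj:
  fixes R :: "real^3^3"
  assumes "R ** transpose R = mat 1"
  shows "c2 (transpose R ** N ** R) = c2 N"
proof -
  have "(transpose R ** N ** R) ** (transpose R ** N ** R) = transpose R ** N ** (R ** transpose R) ** N ** R"
    by (simp add: matrix_mul_assoc)
  also have "\<dots> = transpose R ** (N ** N) ** R" using assms by (simp add: matrix_mul_assoc)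
  finally show ?thesis by (simp add: c2_def trace_conj[OF assms])
qed

lemma det_conj:
  fixes R :: "real^3^3"
  assumes "R ** transpose R = mat 1"
  shows "det (transpose R ** N ** R) = det N"
proof -
  have "det R * det R = 1"
    using det_mul[of R "transpose R"] assms by (simp add: det_I)
  then show ?thesis by (simp add: det_mul)
qed

lemma matrix_add_rdistrib': "((B + C) ** A) = (B ** A) + (C ** A)"
  by (vector matrix_matrix_mult_def sum.distrib[symmetric] field_simps)

lemma mult_row: "((A::real^3^3) ** M) $ i = A$i v* M"
  by (simp add: vec_eq_iff matrix_matrix_mult_def vector_matrix_mult_def)

lemma mult_transpose_nth: "((A::real^3^3) ** transpose B) $ i $ j = A$i \<bullet> B$j"
  by (simp add: matrix_matrix_mult_def transpose_def inner_vec_def mult.commute)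

lemma conj_nth: "((A::real^3^3) ** (M::real^3^3) ** transpose (B::real^3^3)) $ i $ j = A$i \<bullet> (M *v B$j)"
proof -
  have "((A::real^3^3) ** (M::real^3^3) ** transpose (B::real^3^3)) $ i $ j = (A ** M)$i \<bullet> B$j"
    by (rule mult_transpose_nth)
  also have "\<dots> = (A$i v* M) \<bullet> B$j" by (simp add: mult_row)
  also have "\<dots> = A$i \<bullet> (M *v B$j)" by (rule dot_lmul_matrix)
  finally show ?thesis .
qed

lemma tensor_nth: "tensor a b $ i $ j = a$i * b$j"
  by (simp add: tensor_def)

lemma tensor_mult: "tensor b m *v w = (m \<bullet> w) *\<^sub>R b"
  by (simp add: vec_eq_iff tensor_def matrix_vector_mult_def inner_vec_def sum_distrib_left mult_ac)

lemma tensor_conj: "tensor ((A::real^3^3) *v b) (A *v m) = A ** tensor b m ** transpose A"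
  by (simp add: vec_eq_iff conj_nth tensor_mult matrix_vector_mul_component tensor_nth inner_commute)

lemma sym2_conj: "sym2 ((A::real^3^3) *v b) (A *v m) = A ** sym2 b m ** transpose A"
proof -
  have "A ** sym2 b m ** transpose A = (1/2) *\<^sub>R (A ** (tensor b m + tensor m b) ** transpose A)"
    unfolding sym2_def by (simp add: matrix_scalar_ac scalar_matrix_assoc[symmetric])
  also have "A ** (tensor b m + tensor m b) ** transpose A = A ** tensor b m ** transpose A + A ** tensor m b ** transpose A"
    by (simp add: matrix_add_ldistrib matrix_add_rdistrib')
  finally show ?thesis by (simp add: sym2_def tensor_conj)
qed

lemma transpose_vector3_mult:
  "transpose (vector [u, t, v] :: real^3^3) *v y = y$1 *\<^sub>R u + y$2 *\<^sub>R t + y$3 *\<^sub>R v"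
  by (simp add: vec_eq_iff forall_3 matrix_vector_mult_def transpose_def sum_3 mult.commute)

lemma kernel_vec:
  fixes M :: "real^3^3"
  assumes "det M = 0"
  obtains v where "M *v v = 0" "v \<bullet> v = 1"
proof -
  have "rank M \<noteq> CARD(3)" using assms det_eq_0_rank[of M] by simp
  then obtain x where x: "x \<noteq> 0" "M *v x = 0"
    using matrix_nonfull_linear_equations_eq[of M] by blast
  let ?v = "(1 / norm x) *\<^sub>R x"
  have "M *v ?v = 0" using x by (simp add: matrix_vector_mult_scaleR)
  moreover have "?v \<bullet> ?v = 1" using x
    by (simp add: dot_square_norm power2_eq_square)
  ultimately show ?thesis using that by blast
qed

lemma complete_frame:
  fixes v :: "real^3"
  assumes "v \<bullet> v = 1"
  obtains u t where "u \<bullet> u = 1" "t \<bullet> t = 1" "u \<bullet> v = 0" "t \<bullet> v = 0" "u \<bullet> t = 0"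
proof -
  define w :: "real^3" where "w = (if v$2 = 0 \<and> v$3 = 0 then vector [0,1,0] else vector [0, v$3, - v$2])"
  have w0: "w \<noteq> 0" unfolding w_def by (auto simp: vec_eq_iff forall_3)
  have wv: "w \<bullet> v = 0" unfolding w_def by (auto simp: inner3)
  define u where "u = (1 / norm w) *\<^sub>R w"
  have uu: "u \<bullet> u = 1" using w0 by (simp add: u_def dot_square_norm power2_eq_square)
  have uv: "u \<bullet> v = 0" using wv by (simp add: u_def)
  define t where "t = cross3 v u"
  have tv: "t \<bullet> v = 0" "u \<bullet> t = 0" unfolding t_def
    by (simp_all add: cross3_def inner3 algebra_simps)
  have "t \<bullet> t = (v\<bullet>v)*(u\<bullet>u) - (u\<bullet>v)^2" unfolding t_def
    by (simp add: cross3_def inner3 power2_eq_square algebra_simps)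
  then have "t \<bullet> t = 1" using uu uv assms by simp
  then show ?thesis using that uu uv tv by blast
qed

lemma transpose_nth: "transpose A $ i $ j = A $ j $ i"
  by (simp add: transpose_def)

definition frameP :: "real^3^3 \<Rightarrow> real^3^3 \<Rightarrow> bool" where
  "frameP M R \<longleftrightarrow> R ** transpose R = mat 1 \<and> transpose R ** R = mat 1 \<and>
    M = transpose R ** (R ** M ** transpose R) ** R \<and>
    (\<forall>i. (R ** M ** transpose R) $ i $ 3 = 0) \<and> (\<forall>j. (R ** M ** transpose R) $ 3 $ j = 0) \<and>
    transpose (R ** M ** transpose R) = R ** M ** transpose R"

lemma frame:
  fixes M :: "real^3^3"
  assumes sym: "transpose M = M" and d: "det M = 0"
  shows "\<exists>R. frameP M R"
proof -
  obtain v where v: "M *v v = 0" "v \<bullet> v = 1" using kernel_vec[OF d] by blast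
  obtain u t where ut: "u \<bullet> u = 1" "t \<bullet> t = 1" "u \<bullet> v = 0" "t \<bullet> v = 0" "u \<bullet> t = 0"
    using complete_frame[OF v(2)] by blast
  define R :: "real^3^3" where "R = vector [u, t, v]"
  have R1: "R ** transpose R = mat 1"
    using ut v by (simp add: vec_eq_iff forall_3 mult_transpose_nth R_def mat_def inner_commute)
  then have R2: "transpose R ** R = mat 1" using matrix_left_right_inverse by blast
  define N where "N = R ** M ** transpose R"
  have NT: "transpose N = N" unfolding N_def
    by (simp add: matrix_transpose_mul sym matrix_mul_assoc)
  have N3: "N $ i $ 3 = 0" for i unfolding N_def conj_nth by (simp add: R_def v)
  have N3': "N $ 3 $ j = 0" for j using N3[of j] arg_cong[OF NT, of "\<lambda>X. X$3$j"]
    by (simp add: transpose_nth)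
  have "transpose R ** N ** R = (transpose R ** R) ** M ** (transpose R ** R)"
    by (simp add: N_def matrix_mul_assoc)
  then have MN: "M = transpose R ** N ** R" using R2 by simp
  have "frameP M R" unfolding frameP_def N_def[symmetric]
    using R1 R2 MN N3 N3' NT by blast
  then show ?thesis by blast
qed

lemma N_sym2:
  fixes N :: "real^3^3"
  assumes z: "\<And>i. N $ i $ 3 = 0" "\<And>j. N $ 3 $ j = 0" and s: "N$2$1 = N$1$2"
    and c: "N$1$1 * N$2$2 - N$1$2 * N$1$2 \<le> 0"
  shows "\<exists>b m. N = sym2 b m"
proof (cases "N$1$1 = 0")
  case True
  let ?b = "vector [0, 1, 0] :: real^3" and ?m = "vector [2 * N$1$2, N$2$2, 0] :: real^3"
  have "N = sym2 ?b ?m" using z s True by (simp add: vec_eq_iff forall_3 sym2_nth)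
  then show ?thesis by blast
next
  case False
  define D where "D = sqrt (N$1$2 * N$1$2 - N$1$1 * N$2$2)"
  have D2: "D * D = N$1$2 * N$1$2 - N$1$1 * N$2$2" unfolding D_def using c by simp
  let ?b = "vector [N$1$1, N$1$2 + D, 0] :: real^3" and ?m = "vector [1, (N$1$2 - D) / N$1$1, 0] :: real^3"
  have e: "(N$1$2 + D) * ((N$1$2 - D) / N$1$1) = N$2$2"
    using False D2 by (simp add: field_simps)
  have "N = sym2 ?b ?m" using z s False e by (simp add: vec_eq_iff forall_3 sym2_nth field_simps)
  then show ?thesis by blast
qed

lemma frame_facts:
  assumes "frameP M R"
  shows "R ** transpose R = mat 1" "transpose R ** R = mat 1"
    "M = transpose R ** (R ** M ** transpose R) ** R"
    "\<And>i. (R ** M ** transpose R) $ i $ 3 = 0" "\<And>j. (R ** M ** transpose R) $ 3 $ j = 0"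
    "(R ** M ** transpose R) $ 2 $ 1 = (R ** M ** transpose R) $ 1 $ 2"
  using assms unfolding frameP_def apply blast+
  using assms unfolding frameP_def
  by (metis transpose_nth)

lemma sym2_exists:
  fixes M :: "real^3^3"
  assumes sym: "transpose M = M" and d: "det M = 0" and c: "c2 M \<le> 0"
  shows "\<exists>b m. M = sym2 b m"
proof -
  obtain R where fR: "frameP M R" using frame[OF sym d] by blast
  note R = frame_facts[OF fR]
  define N :: "real^3^3" where "N = R ** M ** transpose R"
  have s: "N$2$1 = N$1$2" using R(6) unfolding N_def .
  have MN: "M = transpose R ** N ** R" unfolding N_def by (rule R(3))
  have "c2 N = c2 M" using c2_conj[OF R(1), of N] MN by simp
  then have cN: "N$1$1 * N$2$2 - N$1$2 * N$1$2 \<le> 0" using c s R(4,5) unfolding N_def[symmetric] by (simp add: c2_3)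
  have "\<exists>b m. N = sym2 b m"
    by (rule N_sym2[OF _ _ s cN]) (simp_all add: N_def R(4,5))
  then obtain b m where bm: "N = sym2 b m" by blast
  have "sym2 (transpose R *v b) (transpose R *v m) = transpose R ** sym2 b m ** transpose (transpose R)"
    by (rule sym2_conj)
  then have "M = sym2 (transpose R *v b) (transpose R *v m)" using MN bm by (simp only: transpose_transpose)
  then show ?thesis by blast
qed


lemma rank_ge2:
  fixes M :: "real^3^3"
  assumes "x \<in> range (\<lambda>z. M *v z)" "y \<in> range (\<lambda>z. M *v z)" "x \<bullet> y = 0" "x \<noteq> 0" "y \<noteq> 0"
  shows "rank M \<ge> 2"
proof -
  have xy: "x \<noteq> y" using assms(3,4) by auto
  have ind: "independent {x, y}"
    by (rule pairwise_orthogonal_independent)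
       (use assms(3,4,5) in \<open>auto simp: pairwise_def orthogonal_def inner_commute\<close>)
  have "dim {x, y} = 2" using dim_eq_card_independent[OF ind] xy by simp
  moreover have "dim {x, y} \<le> dim (range (\<lambda>z. M *v z))" using assms(1,2) by (intro dim_subset) auto
  ultimately show ?thesis by (simp add: rank_dim_range)
qed

lemma rank_le1:
  fixes M :: "real^3^3"
  assumes "\<And>z. M *v z \<in> span {w}"
  shows "rank M \<le> 1"
proof -
  have "dim (range (\<lambda>z. M *v z)) \<le> card {w}" using assms by (intro dim_le_card) auto
  then show ?thesis by (simp add: rank_dim_range)
qed

lemma N_eig:
  fixes N :: "real^3^3"
  assumes z: "\<And>i. N $ i $ 3 = 0" "\<And>j. N $ 3 $ j = 0" and s: "N$2$1 = N$1$2"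
    and c: "N$1$1 * N$2$2 - N$1$2 * N$1$2 < 0"
  shows "\<exists>y1 y3 l1 l3. y1 \<bullet> y1 = 1 \<and> y3 \<bullet> y3 = 1 \<and> y1 \<bullet> y3 = 0 \<and> y1$3 = 0 \<and> y3$3 = 0 \<and>
     N *v y1 = l1 *\<^sub>R y1 \<and> N *v y3 = l3 *\<^sub>R y3 \<and> l1 < 0 \<and> 0 < l3"
proof (cases "N$1$2 = 0")
  case True
  have Nv: "N *v y = vector [N$1$1 * y$1, N$2$2 * y$2, 0]" for y
    using z s True by (simp add: vec_eq_iff forall_3 matrix_vector_mult_def sum_3)
  have "N$1$1 * N$2$2 < 0" using c True by simp
  then have "(N$1$1 < 0 \<and> 0 < N$2$2) \<or> (N$2$2 < 0 \<and> 0 < N$1$1)"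
    by (metis mult_neg_neg mult_pos_pos not_less_iff_gr_or_eq mult_zero_left mult_zero_right)
  then show ?thesis
  proof
    assume h: "N$1$1 < 0 \<and> 0 < N$2$2"
    show ?thesis
      by (rule exI[of _ "vector [1,0,0]"], rule exI[of _ "vector [0,1,0]"], rule exI[of _ "N$1$1"],
          rule exI[of _ "N$2$2"]) (use h in \<open>simp add: inner3 Nv vec_eq_iff forall_3\<close>)
  next
    assume h: "N$2$2 < 0 \<and> 0 < N$1$1"
    show ?thesis
      by (rule exI[of _ "vector [0,1,0]"], rule exI[of _ "vector [1,0,0]"], rule exI[of _ "N$2$2"],
          rule exI[of _ "N$1$1"]) (use h in \<open>simp add: inner3 Nv vec_eq_iff forall_3\<close>)
  qed
next
  case False
  define a where "a = N$1$1"
  define b where "b = N$1$2"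
  define g where "g = N$2$2"
  define D where "D = sqrt ((a - g)^2 + 4 * b^2)"
  have D2: "D * D = (a - g)^2 + 4 * b^2" unfolding D_def by simp
  have D0: "D \<ge> 0" unfolding D_def by simp
  define lp where "lp = (a + g + D) / 2"
  define lm where "lm = (a + g - D) / 2"
  have Nv: "N *v y = vector [a * y$1 + b * y$2, b * y$1 + g * y$2, 0]" for y
    using z s by (simp add: vec_eq_iff forall_3 matrix_vector_mult_def sum_3 a_def b_def g_def)
  have root: "l * l - (a + g) * l + (a * g - b * b) = 0" if "l = lp \<or> l = lm" for l
    using that D2 unfolding lp_def lm_def by (elim disjE; simp add: field_simps power2_eq_square; algebra)
  have eig: "N *v vector [b, l - a, 0] = l *\<^sub>R vector [b, l - a, 0]" if "l = lp \<or> l = lm" for l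
    using root[OF that] by (simp add: Nv vec_eq_iff forall_3 algebra_simps)
  have b0: "b \<noteq> 0" using False b_def by simp
  have prod: "lp * lm = a * g - b * b" unfolding lp_def lm_def using D2
    by (simp add: field_simps power2_eq_square)
  have sum: "lp + lm = a + g" unfolding lp_def lm_def by (simp add: field_simps)
  have cc: "a * g - b * b < 0" using c by (simp add: a_def b_def g_def)
  have "lm \<le> lp" unfolding lp_def lm_def using D0 by simp
  then have signs: "lm < 0" "0 < lp" using prod cc
    by (smt (verit) mult_nonneg_nonneg mult_nonpos_nonpos)+
  define wp :: "real^3" where "wp = vector [b, lp - a, 0]"
  define wm :: "real^3" where "wm = vector [b, lm - a, 0]"
  have bb: "b * b > 0" using b0 by (cases "b > 0") (auto simp: mult_neg_neg)
  have np1: "wp \<bullet> wp > 0" using bb unfolding wp_def inner3 by (simp add: add_pos_nonneg)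
  have np2: "wm \<bullet> wm > 0" using bb unfolding wm_def inner3 by (simp add: add_pos_nonneg)
  note np = np1 np2
  have ex: "(lm - a) * (lp - a) = lp * lm - a * (lp + lm) + a * a" by (simp add: algebra_simps)
  have orth: "wm \<bullet> wp = 0" unfolding wp_def wm_def inner3 using prod sum ex
    by (simp add: algebra_simps)
  define y1 where "y1 = (1 / sqrt (wm \<bullet> wm)) *\<^sub>R wm"
  define y3 where "y3 = (1 / sqrt (wp \<bullet> wp)) *\<^sub>R wp"
  have "y1 \<bullet> y1 = 1" "y3 \<bullet> y3 = 1" using np unfolding y1_def y3_def
    by (simp_all add: power2_eq_square[symmetric])
  moreover have "y1 \<bullet> y3 = 0" unfolding y1_def y3_def using orth by simp
  moreover have "y1$3 = 0" "y3$3 = 0" unfolding y1_def y3_def wm_def wp_def by simp_all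
  moreover have "N *v y1 = lm *\<^sub>R y1" unfolding y1_def wm_def
    using eig[of lm] by (simp add: matrix_vector_mult_scaleR scaleR_scaleR mult.commute)
  moreover have "N *v y3 = lp *\<^sub>R y3" unfolding y3_def wp_def
    using eig[of lp] by (simp add: matrix_vector_mult_scaleR scaleR_scaleR mult.commute)
  ultimately show ?thesis using signs by blast
qed


lemma orth_inner:
  fixes R :: "real^3^3"
  assumes "R ** transpose R = mat 1"
  shows "(transpose R *v y) \<bullet> (transpose R *v z) = y \<bullet> z"
proof -
  have "(transpose R *v y) \<bullet> (transpose R *v z) = (y v* R) \<bullet> (transpose R *v z)" by simp
  also have "\<dots> = y \<bullet> (R *v (transpose R *v z))" by (rule dot_lmul_matrix)
  also have "R *v (transpose R *v z) = z" using assms by (simp only: matrix_vector_mul_assoc matrix_vector_mul_lid)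
  finally show ?thesis .
qed

lemma conj_mult:
  fixes R N :: "real^3^3"
  assumes "R ** transpose R = mat 1" "M = transpose R ** N ** R"
  shows "M *v (transpose R *v y) = transpose R *v (N *v y)"
proof -
  have "M *v (transpose R *v y) = transpose R *v (N *v (R *v (transpose R *v y)))"
    using assms(2) by (simp only: matrix_vector_mul_assoc matrix_mul_assoc)
  also have "R *v (transpose R *v y) = y" using assms(1) by (simp only: matrix_vector_mul_assoc matrix_vector_mul_lid)
  finally show ?thesis .
qed

lemma middle_exists:
  fixes M :: "real^3^3"
  assumes sym: "transpose M = M" and d: "det M = 0" and c: "c2 M < 0"
  shows "middle_eigenvalue M 0 \<and> rank M = 2"
proof -
  obtain R where fR: "frameP M R" using frame[OF sym d] by blast
  note R = frame_facts[OF fR]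
  define N :: "real^3^3" where "N = R ** M ** transpose R"
  have s: "N$2$1 = N$1$2" using R(6) unfolding N_def .
  have MN: "M = transpose R ** N ** R" unfolding N_def by (rule R(3))
  have z1: "N $ i $ 3 = 0" for i unfolding N_def by (rule R(4))
  have z2: "N $ 3 $ j = 0" for j unfolding N_def by (rule R(5))
  have "c2 N = c2 M" using c2_conj[OF R(1), of N] MN by simp
  then have cN: "N$1$1 * N$2$2 - N$1$2 * N$1$2 < 0" using c s z1 z2 by (simp add: c2_3)
  obtain y1 y3 l1 l3 where y: "y1 \<bullet> y1 = 1" "y3 \<bullet> y3 = 1" "y1 \<bullet> y3 = 0" "y1$3 = 0" "y3$3 = 0"
     "N *v y1 = l1 *\<^sub>R y1" "N *v y3 = l3 *\<^sub>R y3" "l1 < 0" "0 < l3"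
    using N_eig[OF z1 z2 s cN] by blast
  define y2 :: "real^3" where "y2 = vector [0, 0, 1]"
  have Ny2: "N *v y2 = 0" unfolding y2_def using z1
    by (simp add: vec_eq_iff forall_3 matrix_vector_mult_def sum_3)
  have y2: "y2 \<bullet> y2 = 1" "y1 \<bullet> y2 = 0" "y2 \<bullet> y3 = 0" unfolding y2_def using y(4,5)
    by (simp_all add: inner3)
  define v1 where "v1 = transpose R *v y1"
  define v2 where "v2 = transpose R *v y2"
  define v3 where "v3 = transpose R *v y3"
  have inn: "v1 \<bullet> v1 = 1" "v2 \<bullet> v2 = 1" "v3 \<bullet> v3 = 1" "v1 \<bullet> v2 = 0" "v1 \<bullet> v3 = 0" "v2 \<bullet> v3 = 0"
    unfolding v1_def v2_def v3_def orth_inner[OF R(1)] using y y2 by simp_all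
  have e1: "M *v v1 = l1 *\<^sub>R v1" unfolding v1_def conj_mult[OF R(1) MN] y(6)
    by (simp add: matrix_vector_mult_scaleR)
  have e3: "M *v v3 = l3 *\<^sub>R v3" unfolding v3_def conj_mult[OF R(1) MN] y(7)
    by (simp add: matrix_vector_mult_scaleR)
  have e2: "M *v v2 = 0 *\<^sub>R v2" unfolding v2_def conj_mult[OF R(1) MN] Ny2 by simp
  have "middle_eigenvalue M 0" unfolding middle_eigenvalue_def
    apply (rule exI[of _ v1], rule exI[of _ v2], rule exI[of _ v3], rule exI[of _ l1], rule exI[of _ l3])
    using inn e1 e2 e3 y(8,9) by (simp add: norm_eq_1)
  moreover have "rank M \<le> 2" using d det_eq_0_rank[of M] by simp
  moreover have "rank M \<ge> 2"
  proof (rule rank_ge2)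
    have "M *v ((1 / l1) *\<^sub>R v1) = v1" using e1 y(8) by (simp add: matrix_vector_mult_scaleR)
    then show "v1 \<in> range (\<lambda>z. M *v z)" by (metis rangeI)
    have "M *v ((1 / l3) *\<^sub>R v3) = v3" using e3 y(9) by (simp add: matrix_vector_mult_scaleR)
    then show "v3 \<in> range (\<lambda>z. M *v z)" by (metis rangeI)
    show "v1 \<bullet> v3 = 0" by (rule inn(5))
    show "v1 \<noteq> 0" "v3 \<noteq> 0" using inn(1,3) by auto
  qed
  ultimately show ?thesis by simp
qed

lemma col_mult: "((A::real^3^3) ** transpose B) $ i $ j = (A *v B$j) $ i"
  by (simp add: mult_transpose_nth matrix_vector_mul_component)

lemma middle_imp:
  fixes M :: "real^3^3"
  assumes m: "middle_eigenvalue M 0" and r: "rank M = 2"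
  shows "det M = 0 \<and> c2 M < 0"
proof -
  obtain v1 v2 v3 l1 l3 where v: "norm v1 = 1" "norm v2 = 1" "norm v3 = 1"
    "v1 \<bullet> v2 = 0" "v1 \<bullet> v3 = 0" "v2 \<bullet> v3 = 0"
    "M *v v1 = l1 *\<^sub>R v1" "M *v v2 = 0 *\<^sub>R v2" "M *v v3 = l3 *\<^sub>R v3" "l1 \<le> 0" "0 \<le> l3"
    using m unfolding middle_eigenvalue_def by blast
  have n: "v1 \<bullet> v1 = 1" "v2 \<bullet> v2 = 1" "v3 \<bullet> v3 = 1" using v(1-3) by (simp_all add: norm_eq_1)
  define R :: "real^3^3" where "R = vector [v1, v2, v3]"
  have R1: "R ** transpose R = mat 1"
    using n v(4-6) by (simp add: vec_eq_iff forall_3 mult_transpose_nth R_def mat_def inner_commute)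
  then have R2: "transpose R ** R = mat 1" using matrix_left_right_inverse by blast
  define d :: "real^3" where "d = vector [l1, 0, l3]"
  define D :: "real^3^3" where "D = (\<chi> i j. if i = j then d $ i else 0)"
  have col: "M *v R$j = d$j *\<^sub>R R$j" for j
    using exhaust_3[of j] v(7-9) by (auto simp: R_def d_def)
  have "M ** transpose R = transpose R ** D"
  proof -
    have "(M ** transpose R) $ i $ j = (transpose R ** D) $ i $ j" for i j
    proof -
      have "(M ** transpose R) $ i $ j = d$j * R$j$i" by (simp add: col_mult col)
      moreover have "(transpose R ** D) $ i $ j = d$j * R$j$i"
        using exhaust_3[of j] by (auto simp: matrix_matrix_mult_def transpose_def D_def sum_3)
      ultimately show ?thesis by simp
    qed
    then show ?thesis by (simp add: vec_eq_iff)
  qed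
  then have MD: "M = transpose R ** D ** R"
    by (metis R2 matrix_mul_assoc matrix_mul_rid)
  have detM: "det M = 0" using det_conj[OF R1, of D] MD by (simp add: det_3 D_def d_def)
  have c2M: "c2 M = l1 * l3" using c2_conj[OF R1, of D] MD by (simp add: c2_3 D_def d_def)
  have Mx: "M *v x = (l1 * (v1 \<bullet> x)) *\<^sub>R v1 + (l3 * (v3 \<bullet> x)) *\<^sub>R v3" for x
  proof -
    have "M *v x = transpose R *v (D *v (R *v x))" using MD by (simp only: matrix_vector_mul_assoc matrix_mul_assoc)
    also have "D *v (R *v x) = vector [l1 * (v1 \<bullet> x), 0, l3 * (v3 \<bullet> x)]"
      by (simp add: vec_eq_iff forall_3 matrix_vector_mult_def D_def d_def sum_3 matrix_vector_mul_component R_def inner3)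
    finally show ?thesis unfolding R_def transpose_vector3_mult by simp
  qed
  have "l1 \<noteq> 0"
  proof
    assume "l1 = 0"
    then have "rank M \<le> 1" by (intro rank_le1[of _ v3]) (simp add: Mx span_mul span_base)
    then show False using r by simp
  qed
  moreover have "l3 \<noteq> 0"
  proof
    assume "l3 = 0"
    then have "rank M \<le> 1" by (intro rank_le1[of _ v1]) (simp add: Mx span_mul span_base)
    then show False using r by simp
  qed
  ultimately have "l1 * l3 < 0" using v(10,11) by (simp add: mult_neg_pos less_le mult_nonpos_nonneg)
  then show ?thesis using detM c2M by simp
qed


definition A1 :: "real^3^3 \<Rightarrow> real^3^3 \<Rightarrow> real" where
  "A1 E S = S$1$1*(E$2$2*E$3$3 - E$2$3*E$2$3) + S$2$2*(E$1$1*E$3$3 - E$1$3*E$1$3)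
    + S$3$3*(E$1$1*E$2$2 - E$1$2*E$1$2) + 2*S$1$2*(E$1$3*E$2$3 - E$1$2*E$3$3)
    + 2*S$1$3*(E$1$2*E$2$3 - E$1$3*E$2$2) + 2*S$2$3*(E$1$2*E$1$3 - E$1$1*E$2$3)"

lemma sym_entries:
  assumes "transpose (E::real^3^3) = E"
  shows "E$2$1 = E$1$2" "E$3$1 = E$1$3" "E$3$2 = E$2$3"
  using assms by (metis transpose_nth)+

lemma det_expand:
  fixes E S :: "real^3^3"
  assumes "transpose E = E" "transpose S = S"
  shows "det (E + f *\<^sub>R S) = det E + f * A1 E S + f^2 * A1 S E + f^3 * det S"
  using sym_entries[OF assms(1)] sym_entries[OF assms(2)]
  by (simp add: det_3 A1_def power2_eq_square power3_eq_cube algebra_simps)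

lemma c2_expand:
  fixes E S :: "real^3^3"
  shows "c2 (E + f *\<^sub>R S) = c2 E + f * (c2 (E + S) - c2 E - c2 S) + f^2 * c2 S"
  by (simp add: c2_3 power2_eq_square) algebra

lemma adj_identity:
  fixes E S :: "real^3^3"
  assumes "transpose E = E" "transpose S = S" "E *v v = 0" "v \<bullet> v = 1"
  shows "A1 E S = c2 E * (v \<bullet> (S *v v))"
proof -
  have k: "E$1$1 * v$1 + E$1$2 * v$2 + E$1$3 * v$3 = 0" "E$1$2 * v$1 + E$2$2 * v$2 + E$2$3 * v$3 = 0"
     "E$1$3 * v$1 + E$2$3 * v$2 + E$3$3 * v$3 = 0"
    using assms(3) sym_entries[OF assms(1)]
    by (simp_all add: vec_eq_iff forall_3 matrix_vector_mult_def sum_3)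
  have n: "v$1 * v$1 + v$2 * v$2 + v$3 * v$3 = 1" using assms(4) by (simp add: inner3)
  show ?thesis
    using k n sym_entries[OF assms(1)] sym_entries[OF assms(2)]
    by (simp add: A1_def c2_3 inner3 matrix_vector_mult_def sum_3) algebra
qed



lemma Q_nth: "(- mat 1 + 2 *\<^sub>R tensor e e :: real^3^3) $ i $ k = (if i = k then -1 else 0) + 2 * e$i * e$k"
  by (simp add: mat_def tensor_nth)

lemma Q_orth:
  fixes e :: "real^3"
  assumes "e \<bullet> e = 1"
  shows "(- mat 1 + 2 *\<^sub>R tensor e e) ** transpose (- mat 1 + 2 *\<^sub>R tensor e e) = mat 1"
proof -
  obtain x y z where xyz: "e$1 = x" "e$2 = y" "e$3 = z" by blast
  have n: "x*x + y*y + z*z = 1" using assms xyz by (simp add: inner3)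
  show ?thesis
    using n by (simp add: vec_eq_iff forall_3 mult_transpose_nth inner3 Q_nth xyz mat_def tensor_nth) algebra
qed

lemma Eh_eq:
  fixes E :: "real^3^3" and e :: "real^3"
  assumes "transpose E = E"
  shows "(- mat 1 + 2 *\<^sub>R tensor e e) ** E ** transpose (- mat 1 + 2 *\<^sub>R tensor e e)
     = E + sym2 (4 *\<^sub>R ((e \<bullet> (E *v e)) *\<^sub>R e - E *v e)) e"
proof -
  obtain x y z where xyz: "e$1 = x" "e$2 = y" "e$3 = z" by blast
  obtain p q r s t u where pq: "E$1$1 = p" "E$1$2 = q" "E$1$3 = r" "E$2$2 = s" "E$2$3 = t" "E$3$3 = u" by blast
  have sy: "E$2$1 = q" "E$3$1 = r" "E$3$2 = t" using sym_entries[OF assms] pq by simp_all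
  show ?thesis
    by (simp add: vec_eq_iff forall_3 conj_nth inner3 Q_nth xyz pq sy sym2_nth matrix_vector_mult_def sum_3 tensor_nth mat_def) algebra
qed


lemma sym2_sym: "transpose (sym2 b m) = sym2 b m"
  by (simp add: vec_eq_iff transpose_nth sym2_nth algebra_simps)

lemma sym2_quad: "v \<bullet> (sym2 a e *v v) = (a \<bullet> v) * (e \<bullet> v)"
  by (simp add: inner3 matrix_vector_mult_def sum_3 sym2_nth field_simps)

lemma c2_scale: "c2 (c *\<^sub>R X) = c^2 * c2 X"
  by (simp add: c2_3 power2_eq_square algebra_simps)

lemma sym2_zero: "sym2 0 e = 0"
  by (simp add: vec_eq_iff sym2_nth)

theorem theorem4:
  fixes E :: "real^3^3" and e :: "real^3"
  assumes symE: "transpose E = E"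
    and unit: "norm e = 1"
    and Q_def: "Q = - mat 1 + 2 *\<^sub>R tensor e e"
    and hatE: "Eh = Q ** E ** transpose Q"
    and ne: "Eh \<noteq> E"
    and a_def: "a = 4 *\<^sub>R ((e \<bullet> (E *v e)) *\<^sub>R e - E *v e)"
    and n_def: "n = e"
  shows "(\<forall>f::real. 0 \<le> f \<and> f \<le> 1 \<longrightarrow>
            (\<exists>b m :: real^3. f *\<^sub>R Eh + (1 - f) *\<^sub>R E = (1/2) *\<^sub>R (tensor b m + tensor m b)))
         \<longleftrightarrow>
         ((middle_eigenvalue E 0 \<and> rank E = 2) \<and>
          (\<forall>v2. E *v v2 = 0 \<and> norm v2 = 1 \<longrightarrow> (a \<bullet> v2) * (n \<bullet> v2) = 0) \<and>
          (trace (E + Eh))\<^sup>2 - trace ((E + Eh) ** (E + Eh)) \<le> 0)"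
proof -
  have ee: "e \<bullet> e = 1" using unit by (simp add: norm_eq_1)
  define S where "S = sym2 a e"
  have EhS: "Eh = E + S" unfolding S_def hatE Q_def a_def by (rule Eh_eq[OF symE])
  have QQ: "Q ** transpose Q = mat 1" unfolding Q_def by (rule Q_orth[OF ee])
  then have QQ': "transpose Q ** transpose (transpose Q) = mat 1"
    using matrix_left_right_inverse by auto
  have EhR: "Eh = transpose (transpose Q) ** E ** transpose Q" using hatE by simp
  have detEh: "det Eh = det E" using det_conj[OF QQ', of E] EhR by simp
  have c2Eh: "c2 Eh = c2 E" using c2_conj[OF QQ', of E] EhR by simp
  have symS: "transpose S = S" unfolding S_def by (rule sym2_sym)
  have dS: "det S = 0" unfolding S_def by (rule sym2_det)
  have ae: "a \<bullet> e = 0" unfolding a_def using ee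
    by (simp add: inner_diff_left inner_commute[of "E *v e" e])
  have c2S: "c2 S = - (a \<bullet> a) / 4" unfolding S_def sym2_c2_eq using ae ee by simp
  have c2S0: "c2 S \<le> 0" unfolding c2S by simp
  have Ef: "f *\<^sub>R Eh + (1 - f) *\<^sub>R E = E + f *\<^sub>R S" for f
    by (simp add: EhS algebra_simps)
  have symEf: "transpose (E + f *\<^sub>R S) = E + f *\<^sub>R S" for f
    using symE symS by (simp add: transpose_def vec_eq_iff)
  have "det (E + 1 *\<^sub>R S) = det E" using detEh EhS by simp
  then have A12: "A1 E S + A1 S E = 0" using det_expand[OF symE symS, of 1] dS by simp
  have detf: "det (E + f *\<^sub>R S) = det E + A1 E S * (f - f^2)" for f
    using det_expand[OF symE symS, of f] dS A12
    by (simp add: algebra_simps) (metis add_diff_cancel_left' add_uminus_conv_diff eq_neg_iff_add_eq_0 mult.commute mult_minus_right)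
  have "c2 (E + S) = c2 E" using c2Eh EhS by simp
  then have c2f: "c2 (E + f *\<^sub>R S) = c2 E + c2 S * (f^2 - f)" for f
    using c2_expand[of E f S] by (simp add: algebra_simps)
  have sym2form: "(1/2) *\<^sub>R (tensor b m + tensor m b) = sym2 b m" for b m
    by (simp add: sym2_def)
  have tr: "(trace (E + Eh))\<^sup>2 - trace ((E + Eh) ** (E + Eh)) = 8 * c2 (E + (1/2) *\<^sub>R S)"
  proof -
    have "E + Eh = 2 *\<^sub>R (E + (1/2) *\<^sub>R S)" using EhS by (simp add: scaleR_right_distrib scaleR_2)
    then have "c2 (E + Eh) = 4 * c2 (E + (1/2) *\<^sub>R S)" by (simp add: c2_scale)
    then show ?thesis by (simp add: c2_def)
  qed
  have quad: "A1 E S = c2 E * ((a \<bullet> v) * (e \<bullet> v))" if "E *v v = 0" "v \<bullet> v = 1" for v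
    using adj_identity[OF symE symS that] unfolding S_def sym2_quad .
  show ?thesis
  proof
    assume H: "\<forall>f::real. 0 \<le> f \<and> f \<le> 1 \<longrightarrow>
            (\<exists>b m :: real^3. f *\<^sub>R Eh + (1 - f) *\<^sub>R E = (1/2) *\<^sub>R (tensor b m + tensor m b))"
    have "\<exists>b m. E + 0 *\<^sub>R S = sym2 b m" using H[rule_format, of 0] unfolding Ef sym2form by simp
    then obtain b m where bm: "E = sym2 b m" by auto
    have dE: "det E = 0" unfolding bm by (rule sym2_det)
    have c2E: "c2 E \<le> 0" unfolding bm by (rule sym2_c2)
    have "\<exists>b m. E + (1/2) *\<^sub>R S = sym2 b m" using H[rule_format, of "1/2"] unfolding Ef sym2form by simp
    then obtain b' m' where bm': "E + (1/2) *\<^sub>R S = sym2 b' m'" by auto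
    have "det (E + (1/2) *\<^sub>R S) = 0" unfolding bm' by (rule sym2_det)
    then have A0: "A1 E S = 0" using detf[of "1/2"] dE by (simp add: power2_eq_square)
    have ch: "c2 (E + (1/2) *\<^sub>R S) \<le> 0" unfolding bm' by (rule sym2_c2)
    have c2Elt: "c2 E < 0"
    proof (rule ccontr)
      assume "\<not> c2 E < 0"
      then have "c2 E = 0" using c2E by simp
      then have "a \<bullet> a \<le> 0" using ch c2f[of "1/2"] c2S by (simp add: power2_eq_square)
      then have "a = 0" by (metis inner_gt_zero_iff not_le)
      then have "S = 0" unfolding S_def by (simp add: sym2_zero)
      then show False using ne EhS by simp
    qed
    have C1: "middle_eigenvalue E 0 \<and> rank E = 2" using middle_exists[OF symE dE c2Elt] .
    have C2: "\<forall>v2. E *v v2 = 0 \<and> norm v2 = 1 \<longrightarrow> (a \<bullet> v2) * (n \<bullet> v2) = 0"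
    proof (intro allI impI)
      fix v2 assume "E *v v2 = 0 \<and> norm v2 = 1"
      then have "A1 E S = c2 E * ((a \<bullet> v2) * (e \<bullet> v2))" using quad by (simp add: norm_eq_1)
      then show "(a \<bullet> v2) * (n \<bullet> v2) = 0" using A0 c2Elt n_def by simp
    qed
    have C3: "(trace (E + Eh))\<^sup>2 - trace ((E + Eh) ** (E + Eh)) \<le> 0" using tr ch by simp
    show "(middle_eigenvalue E 0 \<and> rank E = 2) \<and>
          (\<forall>v2. E *v v2 = 0 \<and> norm v2 = 1 \<longrightarrow> (a \<bullet> v2) * (n \<bullet> v2) = 0) \<and>
          (trace (E + Eh))\<^sup>2 - trace ((E + Eh) ** (E + Eh)) \<le> 0" using C1 C2 C3 by blast
  next
    assume C: "(middle_eigenvalue E 0 \<and> rank E = 2) \<and>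
          (\<forall>v2. E *v v2 = 0 \<and> norm v2 = 1 \<longrightarrow> (a \<bullet> v2) * (n \<bullet> v2) = 0) \<and>
          (trace (E + Eh))\<^sup>2 - trace ((E + Eh) ** (E + Eh)) \<le> 0"
    have dc: "det E = 0 \<and> c2 E < 0" using middle_imp C by blast
    obtain v where v: "E *v v = 0" "v \<bullet> v = 1" using kernel_vec dc by blast
    have "(a \<bullet> v) * (e \<bullet> v) = 0" using C v n_def by (simp add: norm_eq_1)
    then have A0: "A1 E S = 0" using quad[OF v] by simp
    have ch: "c2 E - c2 S / 4 \<le> 0" using C tr c2f[of "1/2"] by (simp add: power2_eq_square)
    show "\<forall>f::real. 0 \<le> f \<and> f \<le> 1 \<longrightarrow>
            (\<exists>b m :: real^3. f *\<^sub>R Eh + (1 - f) *\<^sub>R E = (1/2) *\<^sub>R (tensor b m + tensor m b))"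
    proof (intro allI impI)
      fix f :: real assume "0 \<le> f \<and> f \<le> 1"
      have d0: "det (E + f *\<^sub>R S) = 0" using detf[of f] A0 dc by simp
      have "c2 (E + f *\<^sub>R S) = (c2 E - c2 S / 4) + c2 S * (f - 1/2)^2"
        unfolding c2f by (simp add: power2_eq_square algebra_simps)
      also have "\<dots> \<le> 0"
      proof -
        have "c2 S * (f - 1/2)^2 \<le> 0" by (rule mult_nonpos_nonneg[OF c2S0]) simp
        then show ?thesis using ch by linarith
      qed
      finally have "c2 (E + f *\<^sub>R S) \<le> 0" .
      then have "\<exists>b m. E + f *\<^sub>R S = sym2 b m" using sym2_exists[OF symEf d0] by blast
      then show "\<exists>b m :: real^3. f *\<^sub>R Eh + (1 - f) *\<^sub>R E = (1/2) *\<^sub>R (tensor b m + tensor m b)"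
        unfolding Ef sym2form .
    qed
  qed
qed

end
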